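(* Let $f:\mathbb{R}^n\to\mathbb{R}$ be differentiable with $L$-Lipschitz gradient (in $\ell_2$), $\epsilon>0$, $\delta\in(0,1)$. For each $i\in[n]$ let $\tilde\mu_i$ be the average of $\tilde T_i$ i.i.d. samples from a distribution supported in $[0,1]$ with mean $\mu_i$ and standard deviation $\sigma_i$ (independent across $i$), where the $\tilde T_i$ are fixed integers with $\tilde T_i\ge2nL\log(8n/\delta)/\epsilon$. Let $g_i=|\partial_if(\mu)|$. If $$\sum_{i=1}^n\frac{g_i^2\sigma_i^2}{\tilde T_i}+\frac\epsilon3\max_i\frac{g_i}{\tilde T_i}\le\frac{\epsilon^2}{8\log(8/\delta)},$$ then with probability at least $1-\delta/2$, $|f(\tilde\mu)-f(\mu)|\le\epsilon$. *)

theory Defs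
  imports "HOL-Probability.Probability"
begin

end

theory Submission imports Defs begin

lemma exp_quad_bound:
  fixes x :: real assumes "x \<le> 1" shows "exp x \<le> 1 + x + x\<^sup>2"
proof (cases "x \<ge> 0")
  case True thus ?thesis using exp_bound assms by auto
next
  case False
  define y where "y = -x"
  have y: "y > 0" using False y_def by simp
  show ?thesis
  proof (cases "y \<ge> 1")
    case True
    have "exp x \<le> 1" using False by simp
    moreover have "y\<^sup>2 - y \<ge> 0" using True by (simp add: power2_eq_square)
    hence "x\<^sup>2 + x \<ge> 0" by (simp add: y_def)
    ultimately show ?thesis by linarith
  next
    case False
    have "1 + y \<le> exp y" using exp_ge_add_one_self_aux y by simp
    have "(1 + y) * (1 - y + y\<^sup>2) = 1 + y^3" by (simp add: algebra_simps power2_eq_square power3_eq_cube)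
    have pos: "1 - y + y\<^sup>2 \<ge> 0" using False by (simp add: add_nonneg_nonneg)
    have "(1 + y) * (1 - y + y\<^sup>2) \<le> exp y * (1 - y + y\<^sup>2)"
      by (rule mult_right_mono[OF \<open>1 + y \<le> exp y\<close> pos])
    moreover have "y ^ 3 \<ge> 0" using y by simp
    ultimately have "1 \<le> exp y * (1 - y + y\<^sup>2)" using \<open>(1 + y) * (1 - y + y\<^sup>2) = 1 + y^3\<close> by linarith
    hence "exp (-y) \<le> 1 - y + y\<^sup>2"
      by (simp add: exp_minus field_simps)
    thus ?thesis by (simp add: y_def)
  qed
qed

lemma sq_le_of_abs_le: "\<bar>a::real\<bar> \<le> b \<Longrightarrow> a\<^sup>2 \<le> b\<^sup>2"
  by (metis abs_ge_zero order_trans power2_abs power_mono)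

lemma quad_pos: "0 \<le> 1 + (a::real) + a\<^sup>2"
proof -
  have "0 \<le> (a + 1/2)\<^sup>2" by simp
  moreover have "(a + 1/2)\<^sup>2 = a\<^sup>2 + a + 1/4" by (simp add: power2_eq_square algebra_simps)
  ultimately show ?thesis by linarith
qed

lemma (in prob_space) mgf_bound:
  fixes Y :: "'a \<Rightarrow> real"
  assumes [measurable]: "Y \<in> borel_measurable M"
    and bnd: "AE x in M. \<bar>Y x\<bar> \<le> b"
    and E0: "expectation Y = 0"
    and l: "l \<ge> 0" "l * b \<le> 1"
  shows "(\<integral>\<^sup>+x. ennreal (exp (l * Y x)) \<partial>M) \<le> ennreal (exp (l\<^sup>2 * expectation (\<lambda>x. (Y x)\<^sup>2)))"
proof -
  have intY: "integrable M Y"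
    by (rule integrable_const_bound[where B=b]) (use bnd in auto)
  have intY2: "integrable M (\<lambda>x. (Y x)\<^sup>2)"
    by (rule integrable_const_bound[where B="b\<^sup>2"])
       (auto intro!: eventually_mono[OF bnd] sq_le_of_abs_le)
  have "(\<integral>\<^sup>+x. ennreal (exp (l * Y x)) \<partial>M) \<le> (\<integral>\<^sup>+x. ennreal (1 + l * Y x + (l * Y x)\<^sup>2) \<partial>M)"
  proof (intro nn_integral_mono_AE eventually_mono[OF bnd] ennreal_leI exp_quad_bound)
    fix x assume "\<bar>Y x\<bar> \<le> b"
    hence "l * Y x \<le> l * b" using l by (intro mult_left_mono) auto
    thus "l * Y x \<le> 1" using l by linarith
  qed
  also have "\<dots> = ennreal (\<integral>x. (1 + l * Y x + (l * Y x)\<^sup>2) \<partial>M)"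
  proof (rule nn_integral_eq_integral)
    show "integrable M (\<lambda>x. 1 + l * Y x + (l * Y x)\<^sup>2)"
      using intY intY2 by (auto simp: power_mult_distrib)
    show "AE x in M. 0 \<le> 1 + l * Y x + (l * Y x)\<^sup>2"
      by (intro AE_I2 quad_pos)
  qed
  also have "(\<integral>x. (1 + l * Y x + (l * Y x)\<^sup>2) \<partial>M) = 1 + l\<^sup>2 * expectation (\<lambda>x. (Y x)\<^sup>2)"
    using intY intY2 E0 by (simp add: power_mult_distrib prob_space)
  also have "\<dots> \<le> exp (l\<^sup>2 * expectation (\<lambda>x. (Y x)\<^sup>2))"
    using exp_ge_add_one_self by simp
  finally show ?thesis by (simp add: ennreal_leI)
qed


lemma (in prob_space) bernstein_tail:
  fixes Y :: "'i \<Rightarrow> 'a \<Rightarrow> real"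
  assumes fin: "finite I" and indep: "indep_vars (\<lambda>_. borel) Y I"
    and bnd: "\<And>i. i \<in> I \<Longrightarrow> AE x in M. \<bar>Y i x\<bar> \<le> b"
    and E0: "\<And>i. i \<in> I \<Longrightarrow> expectation (Y i) = 0"
    and l: "l > 0" "l * b \<le> 1"
  shows "prob {x\<in>space M. (\<Sum>i\<in>I. Y i x) \<ge> t}
           \<le> exp (- l * t + l\<^sup>2 * (\<Sum>i\<in>I. expectation (\<lambda>x. (Y i x)\<^sup>2)))"
proof -
  have rv[measurable]: "\<And>i. i \<in> I \<Longrightarrow> random_variable borel (Y i)"
    using indep unfolding indep_vars_def by auto
  have "ennreal (prob {x\<in>space M. (\<Sum>i\<in>I. Y i x) \<ge> t}) = emeasure M {x\<in>space M. (\<Sum>i\<in>I. Y i x) \<ge> t}"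
    by (simp add: emeasure_eq_measure)
  also have "\<dots> \<le> ennreal (exp (-l*t)) * (\<integral>\<^sup>+x\<in>space M. exp (l * (\<Sum>i\<in>I. Y i x)) \<partial>M)"
    by (intro Chernoff_ineq_nn_integral_ge l) (auto intro!: borel_measurable_sum rv)
  also have "(\<integral>\<^sup>+x\<in>space M. exp (l * (\<Sum>i\<in>I. Y i x)) \<partial>M) =
             (\<integral>\<^sup>+x. (\<Prod>i\<in>I. ennreal (exp (l * Y i x))) \<partial>M)"
    by (intro nn_integral_cong)
       (simp_all add: sum_distrib_left exp_sum fin prod_ennreal)
  also have "\<dots> = (\<Prod>i\<in>I. \<integral>\<^sup>+x. ennreal (exp (l * Y i x)) \<partial>M)"
    by (intro indep_vars_nn_integral fin indep_vars_compose2[OF indep]) auto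
  also have "ennreal (exp (-l * t)) * \<dots> \<le>
               ennreal (exp (-l * t)) * (\<Prod>i\<in>I. ennreal (exp (l\<^sup>2 * expectation (\<lambda>x. (Y i x)\<^sup>2))))"
  proof (intro mult_left_mono prod_mono_ennreal)
    fix i assume i: "i \<in> I"
    show "(\<integral>\<^sup>+x. ennreal (exp (l * Y i x)) \<partial>M) \<le> ennreal (exp (l\<^sup>2 * expectation (\<lambda>x. (Y i x)\<^sup>2)))"
      by (rule mgf_bound[OF rv[OF i] bnd[OF i] E0[OF i]]) (use l in auto)
  qed auto
  also have "\<dots> = ennreal (exp (-l*t) * (\<Prod>i\<in>I. exp (l\<^sup>2 * expectation (\<lambda>x. (Y i x)\<^sup>2))))"
    by (simp add: prod_ennreal prod_nonneg flip: ennreal_mult)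
  also have "exp (-l*t) * (\<Prod>i\<in>I. exp (l\<^sup>2 * expectation (\<lambda>x. (Y i x)\<^sup>2)))
      = exp (- l * t + l\<^sup>2 * (\<Sum>i\<in>I. expectation (\<lambda>x. (Y i x)\<^sup>2)))"
    by (simp only: exp_add sum_distrib_left exp_sum[OF fin])
  finally show ?thesis
    by (subst (asm) ennreal_le_iff) simp_all
qed


lemma (in prob_space) hoeff_helper:
  fixes Z :: "'i \<Rightarrow> 'a \<Rightarrow> real"
  assumes fin: "finite I" and ne: "I \<noteq> {}" and indep: "indep_vars (\<lambda>_. borel) Z I"
    and bnd: "\<And>i. i \<in> I \<Longrightarrow> AE x in M. Z i x \<in> {0..1}"
    and E: "\<And>i. i \<in> I \<Longrightarrow> expectation (Z i) = m"
    and s: "s \<ge> 0"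
  shows "prob {x\<in>space M. \<bar>(\<Sum>i\<in>I. Z i x) - real (card I) * m\<bar> \<ge> real (card I) * s}
          \<le> 2 * exp (-2 * real (card I) * s\<^sup>2)"
proof -
  interpret H: Hoeffding_ineq M I Z "\<lambda>_. 0" "\<lambda>_. 1" "\<Sum>i\<in>I. expectation (Z i)"
    by unfold_locales (use fin indep bnd in auto)
  have c: "card I > 0" using fin ne by (simp add: card_gt_0_iff)
  have "prob {x\<in>space M. \<bar>(\<Sum>i\<in>I. Z i x) - (\<Sum>i\<in>I. expectation (Z i))\<bar> \<ge> real (card I) * s}
        \<le> 2 * exp (-2 * (real (card I) * s)\<^sup>2 / (\<Sum>i\<in>I. (1 - 0)\<^sup>2))"
    by (rule H.Hoeffding_ineq_abs_ge) (use s c in auto)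
  also have "(\<Sum>i\<in>I. expectation (Z i)) = real (card I) * m" using E by simp
  also have "-2 * (real (card I) * s)\<^sup>2 / (\<Sum>i\<in>I. (1 - (0::real))\<^sup>2) = -2 * real (card I) * s\<^sup>2"
    using c by (simp add: power2_eq_square field_simps)
  finally show ?thesis .
qed

lemma taylor_bound:
  fixes f :: "real ^ 'n \<Rightarrow> real" and gradf :: "real ^ 'n \<Rightarrow> real ^ 'n"
  assumes grad: "\<And>x. (f has_derivative (\<lambda>h. gradf x \<bullet> h)) (at x)"
    and lip: "\<And>x y. norm (gradf x - gradf y) \<le> L * norm (x - y)"
    and L: "L \<ge> 0"
  shows "\<bar>f y - f x - gradf x \<bullet> (y - x)\<bar> \<le> L * (norm (y - x))\<^sup>2"
proof -
  define \<phi> where "\<phi> t = f (x + t *\<^sub>R (y - x)) - t * (gradf x \<bullet> (y - x))" for t :: real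
  have d: "(\<phi> has_derivative (\<lambda>h. h * ((gradf (x + t *\<^sub>R (y - x)) - gradf x) \<bullet> (y - x)))) (at t within {0..1})" for t
  proof -
    have 1: "((\<lambda>t. x + t *\<^sub>R (y - x)) has_derivative (\<lambda>h. h *\<^sub>R (y - x))) (at t within {0..1})"
      by (auto intro!: derivative_eq_intros)
    have 2: "((\<lambda>t. f (x + t *\<^sub>R (y - x))) has_derivative (\<lambda>h. gradf (x + t *\<^sub>R (y - x)) \<bullet> (h *\<^sub>R (y - x)))) (at t within {0..1})"
      by (rule has_derivative_compose[OF 1 grad])
    have 3: "((\<lambda>t. t * (gradf x \<bullet> (y - x))) has_derivative (\<lambda>h. h * (gradf x \<bullet> (y - x)))) (at t within {0..1})"
      by (auto intro!: derivative_eq_intros)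
    show ?thesis unfolding \<phi>_def
      using has_derivative_diff[OF 2 3] by (simp add: algebra_simps inner_diff_left)
  qed
  obtain t where t: "t \<in> {0..1}" and eq: "\<phi> 1 - \<phi> 0 = (1 - 0) * ((gradf (x + t *\<^sub>R (y - x)) - gradf x) \<bullet> (y - x))"
    using mvt_very_simple[of 0 1 \<phi>, OF _ d] by auto
  have "\<phi> 1 - \<phi> 0 = f y - f x - gradf x \<bullet> (y - x)" by (simp add: \<phi>_def)
  hence "\<bar>f y - f x - gradf x \<bullet> (y - x)\<bar> = \<bar>(gradf (x + t *\<^sub>R (y - x)) - gradf x) \<bullet> (y - x)\<bar>"
    using eq by simp
  also have "\<dots> \<le> norm (gradf (x + t *\<^sub>R (y - x)) - gradf x) * norm (y - x)"
    by (rule Cauchy_Schwarz_ineq2)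
  also have "\<dots> \<le> (L * norm (t *\<^sub>R (y - x))) * norm (y - x)"
    by (intro mult_right_mono) (use lip[of "x + t *\<^sub>R (y - x)" x] in auto)
  also have "\<dots> \<le> (L * norm (y - x)) * norm (y - x)"
    using t L by (intro mult_right_mono mult_left_mono) (auto simp: mult_left_le_one_le)
  finally show ?thesis by (simp add: power2_eq_square mult_ac)
qed

lemma measurable_vec_lambda:
  fixes h :: "'n::finite \<Rightarrow> 'a \<Rightarrow> real"
  assumes "\<And>i. h i \<in> borel_measurable M"
  shows "(\<lambda>\<omega>. \<chi> i. h i \<omega>) \<in> borel_measurable M"
proof (rule borel_measurable_euclidean_space[THEN iffD2], intro ballI)
  fix b :: "real ^ 'n" assume "b \<in> Basis"
  then obtain j where b: "b = axis j 1" by (auto simp: Basis_vec_def)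
  show "(\<lambda>\<omega>. (\<chi> i. h i \<omega>) \<bullet> b) \<in> borel_measurable M"
    using assms[of j] by (simp add: b inner_axis)
qed


theorem lemma9:
  fixes f :: "real ^ 'n \<Rightarrow> real"
    and gradf :: "real ^ 'n \<Rightarrow> real ^ 'n"
    and L \<epsilon> \<delta> :: real
    and M :: "'a measure"
    and X :: "'n \<Rightarrow> nat \<Rightarrow> 'a \<Rightarrow> real"
    and D :: "'n \<Rightarrow> real measure"
    and T :: "'n \<Rightarrow> nat"
    and \<mu> \<sigma> :: "real ^ 'n"
  assumes grad: "\<And>x. (f has_derivative (\<lambda>h. gradf x \<bullet> h)) (at x)"
    and lip: "\<And>x y. norm (gradf x - gradf y) \<le> L * norm (x - y)"
    and eps: "\<epsilon> > 0"
    and delta: "0 < \<delta>" "\<delta> < 1"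
    and P: "prob_space M"
    and indep: "prob_space.indep_vars M (\<lambda>_. borel) (\<lambda>p. X (fst p) (snd p))
                  {p. snd p < T (fst p)}"
    and ident: "\<And>i j. j < T i \<Longrightarrow> distr M borel (X i j) = D i"
    and supp: "\<And>i. AE x in D i. x \<in> {0..1}"
    and mean: "\<And>i. \<mu> $ i = (\<integral>x. x \<partial>D i)"
    and sd: "\<And>i. \<sigma> $ i = sqrt (\<integral>x. (x - \<mu> $ i)\<^sup>2 \<partial>D i)"
    and Tpos: "\<And>i. T i > 0"
    and Tbound: "\<And>i. real (T i) \<ge> 2 * real CARD('n) * L * ln (8 * real CARD('n) / \<delta>) / \<epsilon>"
    and cond: "(\<Sum>i\<in>UNIV. (\<bar>gradf \<mu> $ i\<bar>)\<^sup>2 * (\<sigma> $ i)\<^sup>2 / real (T i))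
                 + \<epsilon> / 3 * (MAX i\<in>UNIV. \<bar>gradf \<mu> $ i\<bar> / real (T i))
               \<le> \<epsilon>\<^sup>2 / (8 * ln (8 / \<delta>))"
  shows "prob_space.prob M
           {\<omega> \<in> space M. \<bar>f (\<chi> i. (\<Sum>j<T i. X i j \<omega>) / real (T i)) - f \<mu>\<bar> \<le> \<epsilon>}
         \<ge> 1 - \<delta> / 2"
proof -
  interpret prob_space M by (rule P)
  define n where "n = real CARD('n)"
  have n: "n \<ge> 1" unfolding n_def by simp
  define J where "J = {p :: 'n \<times> nat. snd p < T (fst p)}"
  have J_eq: "J = Sigma UNIV (\<lambda>i. {..<T i})" by (auto simp: J_def)
  have finJ: "finite J" unfolding J_eq by (intro finite_SigmaI) auto
  have rv[measurable]: "random_variable borel (X i j)" if "j < T i" for i j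
  proof -
    have "\<forall>p\<in>{p. snd p < T (fst p)}. random_variable borel (X (fst p) (snd p))"
      using indep unfolding indep_vars_def by blast
    from bspec[OF this, of "(i,j)"] that show ?thesis by simp
  qed
  have Dd: "D i = distr M borel (X i j)" if "j < T i" for i j using ident[OF that] by simp
  have AE01: "AE \<omega> in M. X i j \<omega> \<in> {0..1}" if "j < T i" for i j
    using supp[of i] unfolding Dd[OF that] by (subst (asm) AE_distr_iff[OF rv[OF that]]) auto
  have intX: "integrable M (X i j)" if "j < T i" for i j
  proof (rule integrable_const_bound[where B=1])
    show "AE x in M. norm (X i j x) \<le> 1" using AE01[OF that] by (rule eventually_mono) auto
  qed (use rv[OF that] in simp)
  have EX: "expectation (X i j) = \<mu> $ i" if "j < T i" for i j
    unfolding mean Dd[OF that] by (subst integral_distr[OF rv[OF that]]) auto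
  have EV: "expectation (\<lambda>\<omega>. (X i j \<omega> - \<mu> $ i)\<^sup>2) = (\<sigma> $ i)\<^sup>2" if "j < T i" for i j
  proof -
    have "expectation (\<lambda>\<omega>. (X i j \<omega> - \<mu> $ i)\<^sup>2) = (\<integral>x. (x - \<mu> $ i)\<^sup>2 \<partial>D i)"
      unfolding Dd[OF that] by (subst integral_distr[OF rv[OF that]]) auto
    moreover have "(\<integral>x. (x - \<mu> $ i)\<^sup>2 \<partial>D i) \<ge> 0" by simp
    ultimately show ?thesis unfolding sd by simp
  qed
  have mu01: "\<mu> $ i \<in> {0..1}" for i
  proof -
    have "0 \<le> expectation (X i 0)"
      by (rule integral_nonneg_AE) (use AE01[OF Tpos[of i]] in \<open>auto elim!: eventually_mono\<close>)
    moreover have "expectation (X i 0) \<le> expectation (\<lambda>_. 1::real)"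
      by (rule integral_mono_AE) (use intX[OF Tpos[of i]] AE01[OF Tpos[of i]] in \<open>auto elim!: eventually_mono\<close>)
    ultimately show ?thesis using EX[OF Tpos[of i]] by (simp add: prob_space)
  qed
  define g where "g = gradf \<mu>"
  define B where "B = (MAX i\<in>UNIV. \<bar>g $ i\<bar> / real (T i))"
  define V where "V = (\<Sum>i\<in>UNIV. (\<bar>g $ i\<bar>)\<^sup>2 * (\<sigma> $ i)\<^sup>2 / real (T i))"
  define K where "K = ln (8 / \<delta>)"
  define K2 where "K2 = ln (8 * n / \<delta>)"
  have K: "K > 0" unfolding K_def using delta by (intro ln_gt_zero) (simp add: field_simps)
  have K2: "K2 > 0" unfolding K2_def using delta n by (intro ln_gt_zero) (simp add: field_simps)
  have Bge: "\<bar>g $ i\<bar> / real (T i) \<le> B" for i unfolding B_def by (rule Max_ge) auto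
  have B0: "B \<ge> 0" using Bge[of undefined] by (meson abs_ge_zero divide_nonneg_nonneg of_nat_0_le_iff order_trans)
  have V0: "V \<ge> 0" unfolding V_def by (intro sum_nonneg) auto
  have cond': "V + \<epsilon> / 3 * B \<le> \<epsilon>\<^sup>2 / (8 * K)" using cond unfolding V_def B_def K_def g_def .
  have "\<epsilon> / 3 * B \<ge> 0" using B0 eps by simp
  hence VK: "V \<le> \<epsilon>\<^sup>2 / (8 * K)" using cond' by linarith
  have BK: "\<epsilon> / 3 * B \<le> \<epsilon>\<^sup>2 / (8 * K)" using cond' V0 by linarith
  define l where "l = 2 * K / \<epsilon>"
  have l: "l > 0" unfolding l_def using K eps by simp
  have lB: "l * B \<le> 1"
  proof -
    have "B \<le> 3 * \<epsilon> / (8 * K)" using BK eps K by (simp add: field_simps power2_eq_square)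
    hence "l * B \<le> l * (3 * \<epsilon> / (8 * K))" using l by (intro mult_left_mono) auto
    also have "\<dots> = 3 / 4" unfolding l_def using K eps by (simp add: field_simps)
    finally show ?thesis by simp
  qed
  have expo: "- l * (3 * \<epsilon> / 4) + l\<^sup>2 * V \<le> - K"
  proof -
    have "l\<^sup>2 * V \<le> l\<^sup>2 * (\<epsilon>\<^sup>2 / (8 * K))" using VK by (intro mult_left_mono) auto
    also have "\<dots> = K / 2" unfolding l_def using K eps by (simp add: field_simps power2_eq_square)
    finally have "l\<^sup>2 * V \<le> K / 2" .
    moreover have "- l * (3 * \<epsilon> / 4) = - 3 * K / 2" unfolding l_def using eps by (simp add: field_simps)
    ultimately show ?thesis by linarith
  qed
  have expK: "exp (- K) = \<delta> / 8" unfolding K_def using delta by (simp add: exp_minus exp_ln)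
  define c where "c p = g $ fst p / real (T (fst p))" for p :: "'n \<times> nat"
  define m where "m p = \<mu> $ fst p" for p :: "'n \<times> nat"
  define Y where "Y p \<omega> = c p * (X (fst p) (snd p) \<omega> - m p)" for p \<omega>
  have Y_eq: "Y = (\<lambda>p \<omega>. c p * (X (fst p) (snd p) \<omega> - m p))" by (intro ext) (simp add: Y_def)
  have sumJ: "(\<Sum>p\<in>J. h p) = (\<Sum>i\<in>UNIV. \<Sum>j<T i. h (i, j))" for h :: "'n \<times> nat \<Rightarrow> real"
    unfolding J_eq by (subst sum.Sigma) auto
  have indep': "indep_vars (\<lambda>_. borel) (\<lambda>p. X (fst p) (snd p)) J" using indep unfolding J_def .
  have indY: "indep_vars (\<lambda>_. borel) Y J"
    unfolding Y_eq by (rule indep_vars_compose2[OF indep', of "\<lambda>p x. c p * (x - m p)", simplified]) auto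
  have indY': "indep_vars (\<lambda>_. borel) (\<lambda>p \<omega>. - Y p \<omega>) J"
    unfolding Y_eq by (rule indep_vars_compose2[OF indep', of "\<lambda>p x. - (c p * (x - m p))", simplified]) auto
  have cB: "\<bar>c p\<bar> \<le> B" for p
    using Bge[of "fst p"] Tpos[of "fst p"] by (simp add: c_def abs_divide)
  have bndY: "AE \<omega> in M. \<bar>Y p \<omega>\<bar> \<le> B" if "p \<in> J" for p
  proof -
    have pT: "snd p < T (fst p)" using that by (simp add: J_def)
    show ?thesis
    proof (rule eventually_mono[OF AE01[OF pT]])
      fix \<omega> assume "X (fst p) (snd p) \<omega> \<in> {0..1}"
      hence "\<bar>X (fst p) (snd p) \<omega> - m p\<bar> \<le> 1" using mu01[of "fst p"] by (auto simp: m_def)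
      hence "\<bar>c p\<bar> * \<bar>X (fst p) (snd p) \<omega> - m p\<bar> \<le> \<bar>c p\<bar> * 1" by (intro mult_left_mono) auto
      thus "\<bar>Y p \<omega>\<bar> \<le> B" using cB[of p] by (simp add: Y_def abs_mult)
    qed
  qed
  have EY: "expectation (Y p) = 0" if "p \<in> J" for p
  proof -
    have pT: "snd p < T (fst p)" using that by (simp add: J_def)
    have "expectation (Y p) = c p * (expectation (X (fst p) (snd p)) - m p)"
      unfolding Y_def using intX[OF pT] by (simp add: prob_space)
    thus ?thesis using EX[OF pT] by (simp add: m_def)
  qed
  have EY2: "expectation (\<lambda>\<omega>. (Y p \<omega>)\<^sup>2) = (c p)\<^sup>2 * (\<sigma> $ fst p)\<^sup>2" if "p \<in> J" for p
  proof -
    have pT: "snd p < T (fst p)" using that by (simp add: J_def)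
    show ?thesis unfolding Y_def power_mult_distrib integral_mult_right_zero using EV[OF pT] by (simp add: m_def)
  qed
  have sumV: "(\<Sum>p\<in>J. expectation (\<lambda>\<omega>. (Y p \<omega>)\<^sup>2)) = V"
  proof -
    have "(\<Sum>p\<in>J. expectation (\<lambda>\<omega>. (Y p \<omega>)\<^sup>2)) = (\<Sum>p\<in>J. (c p)\<^sup>2 * (\<sigma> $ fst p)\<^sup>2)"
      using EY2 by (intro sum.cong) auto
    also have "\<dots> = (\<Sum>i\<in>UNIV. real (T i) * ((g $ i / real (T i))\<^sup>2 * (\<sigma> $ i)\<^sup>2))"
      by (simp add: sumJ c_def)
    also have "\<dots> = V" unfolding V_def
    proof (intro sum.cong refl)
      fix i
      have "real (T i) > 0" using Tpos[of i] by simp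
      thus "real (T i) * ((g $ i / real (T i))\<^sup>2 * (\<sigma> $ i)\<^sup>2) = (\<bar>g $ i\<bar>)\<^sup>2 * (\<sigma> $ i)\<^sup>2 / real (T i)"
        by (simp add: power2_eq_square field_simps)
    qed
    finally show ?thesis .
  qed
  have sumV': "(\<Sum>p\<in>J. expectation (\<lambda>\<omega>. (- Y p \<omega>)\<^sup>2)) = V" using sumV by simp
  define \<mu>t where "\<mu>t \<omega> = (\<chi> i. (\<Sum>j<T i. X i j \<omega>) / real (T i))" for \<omega>
  have sumY: "(\<Sum>p\<in>J. Y p \<omega>) = g \<bullet> (\<mu>t \<omega> - \<mu>)" for \<omega>
  proof -
    have "(\<Sum>p\<in>J. Y p \<omega>) = (\<Sum>i\<in>UNIV. \<Sum>j<T i. g $ i / real (T i) * (X i j \<omega> - \<mu> $ i))"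
      by (simp add: sumJ Y_def c_def m_def)
    also have "\<dots> = (\<Sum>i\<in>UNIV. g $ i * ((\<Sum>j<T i. X i j \<omega>) / real (T i) - \<mu> $ i))"
    proof (intro sum.cong refl)
      fix i
      have "(\<Sum>j<T i. g $ i / real (T i) * (X i j \<omega> - \<mu> $ i))
            = g $ i / real (T i) * ((\<Sum>j<T i. X i j \<omega>) - real (T i) * \<mu> $ i)"
        by (simp add: sum_distrib_left sum_subtractf algebra_simps)
      also have "\<dots> = g $ i * ((\<Sum>j<T i. X i j \<omega>) / real (T i) - \<mu> $ i)"
        using Tpos[of i] by (simp add: field_simps)
      finally show "(\<Sum>j<T i. g $ i / real (T i) * (X i j \<omega> - \<mu> $ i)) = \<dots>" .
    qed
    also have "\<dots> = g \<bullet> (\<mu>t \<omega> - \<mu>)" by (simp add: inner_vec_def \<mu>t_def)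
    finally show ?thesis .
  qed
  define E1 where "E1 = {\<omega>\<in>space M. (\<Sum>p\<in>J. Y p \<omega>) \<ge> 3 * \<epsilon> / 4}"
  define E2 where "E2 = {\<omega>\<in>space M. (\<Sum>p\<in>J. - Y p \<omega>) \<ge> 3 * \<epsilon> / 4}"
  have PE1: "prob E1 \<le> \<delta> / 8"
  proof -
    have "prob E1 \<le> exp (- l * (3 * \<epsilon> / 4) + l\<^sup>2 * (\<Sum>p\<in>J. expectation (\<lambda>\<omega>. (Y p \<omega>)\<^sup>2)))"
      unfolding E1_def by (rule bernstein_tail[OF finJ indY bndY EY l lB])
    also have "\<dots> \<le> exp (- K)" unfolding sumV using expo by simp
    finally show ?thesis using expK by simp
  qed
  have PE2: "prob E2 \<le> \<delta> / 8"
  proof -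
    have "prob E2 \<le> exp (- l * (3 * \<epsilon> / 4) + l\<^sup>2 * (\<Sum>p\<in>J. expectation (\<lambda>\<omega>. (- Y p \<omega>)\<^sup>2)))"
      unfolding E2_def by (rule bernstein_tail[OF finJ indY' _ _ l]) (use bndY EY lB in auto)
    also have "\<dots> \<le> exp (- K)" unfolding sumV' using expo by simp
    finally show ?thesis using expK by simp
  qed
  define s where "s i = sqrt (K2 / (2 * real (T i)))" for i
  define E3 where "E3 i = {\<omega>\<in>space M. \<bar>(\<Sum>j<T i. X i j \<omega>) - real (T i) * \<mu> $ i\<bar> \<ge> real (T i) * s i}" for i
  have s2: "(s i)\<^sup>2 = K2 / (2 * real (T i))" for i
  proof -
    have "K2 / (2 * real (T i)) \<ge> 0" using K2 by (intro divide_nonneg_nonneg) auto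
    thus ?thesis unfolding s_def by simp
  qed
  have expK2: "exp (- K2) = \<delta> / (8 * n)" unfolding K2_def using delta n by (simp add: exp_minus exp_ln)
  have PE3: "prob (E3 i) \<le> \<delta> / (4 * n)" for i
  proof -
    define Ji where "Ji = (\<lambda>j. (i, j)) ` {..<T i}"
    have inj: "inj_on (\<lambda>j. (i, j)) {..<T i}" by (auto simp: inj_on_def)
    have cardJi: "card Ji = T i" unfolding Ji_def using card_image[OF inj] by simp
    have sumJi: "(\<Sum>p\<in>Ji. X (fst p) (snd p) \<omega>) = (\<Sum>j<T i. X i j \<omega>)" for \<omega>
      unfolding Ji_def by (subst sum.reindex[OF inj]) simp
    have JiJ: "Ji \<subseteq> J" unfolding Ji_def J_def by auto
    have H: "prob {\<omega>\<in>space M. \<bar>(\<Sum>p\<in>Ji. X (fst p) (snd p) \<omega>) - real (card Ji) * \<mu> $ i\<bar> \<ge> real (card Ji) * s i}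
          \<le> 2 * exp (-2 * real (card Ji) * (s i)\<^sup>2)"
    proof (rule hoeff_helper)
      show "finite Ji" unfolding Ji_def by simp
      show "Ji \<noteq> {}" unfolding Ji_def using Tpos[of i] by auto
      show "indep_vars (\<lambda>_. borel) (\<lambda>p. X (fst p) (snd p)) Ji" by (rule indep_vars_subset[OF indep' JiJ])
      show "AE x in M. X (fst p) (snd p) x \<in> {0..1}" if "p \<in> Ji" for p
        using that AE01 unfolding Ji_def by auto
      show "expectation (X (fst p) (snd p)) = \<mu> $ i" if "p \<in> Ji" for p
        using that EX unfolding Ji_def by auto
      show "s i \<ge> 0" unfolding s_def using K2 by (simp add: less_imp_le)
    qed
    have eqK: "-2 * real (T i) * (s i)\<^sup>2 = - K2"
      unfolding s2 using K2 Tpos[of i] by (simp add: field_simps)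
    have "prob (E3 i) \<le> 2 * exp (-2 * real (T i) * (s i)\<^sup>2)"
      using H unfolding E3_def sumJi cardJi .
    hence "prob (E3 i) \<le> 2 * exp (- K2)" unfolding eqK .
    thus ?thesis unfolding expK2 by simp
  qed
  have mSY[measurable]: "(\<lambda>\<omega>. \<Sum>p\<in>J. Y p \<omega>) \<in> borel_measurable M"
    by (rule borel_measurable_sum) (auto simp: Y_def J_def)
  have mSY'[measurable]: "(\<lambda>\<omega>. \<Sum>p\<in>J. - Y p \<omega>) \<in> borel_measurable M"
    by (rule borel_measurable_sum) (auto simp: Y_def J_def)
  have mSX[measurable]: "(\<lambda>\<omega>. \<Sum>j<T i. X i j \<omega>) \<in> borel_measurable M" for i
    by (rule borel_measurable_sum) auto
  have mE1: "E1 \<in> events" unfolding E1_def by measurable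
  have mE2: "E2 \<in> events" unfolding E2_def by measurable
  have mE3: "E3 i \<in> events" for i unfolding E3_def by measurable
  have cf: "continuous_on UNIV f"
    using grad by (intro continuous_at_imp_continuous_on ballI has_derivative_continuous) blast
  have mf[measurable]: "f \<in> borel_measurable borel" by (rule borel_measurable_continuous_onI[OF cf])
  have mmt[measurable]: "\<mu>t \<in> borel_measurable M"
    unfolding \<mu>t_def by (intro measurable_vec_lambda) auto
  define Tg where "Tg = {\<omega> \<in> space M. \<bar>f (\<mu>t \<omega>) - f \<mu>\<bar> \<le> \<epsilon>}"
  have mTg: "Tg \<in> events" unfolding Tg_def by measurable
  define U where "U = E1 \<union> E2 \<union> (\<Union>i. E3 i)"
  have mU: "U \<in> events" unfolding U_def using mE1 mE2 mE3 by auto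
  have PU: "prob U \<le> \<delta> / 2"
  proof -
    have "prob U \<le> prob (E1 \<union> E2) + prob (\<Union>i. E3 i)"
      unfolding U_def by (rule measure_Un_le) (use mE1 mE2 mE3 in auto)
    also have "prob (E1 \<union> E2) \<le> prob E1 + prob E2" by (rule measure_Un_le) (use mE1 mE2 in auto)
    also have "prob (\<Union>i. E3 i) \<le> (\<Sum>i\<in>UNIV. prob (E3 i))"
      by (rule measure_UNION_le) (use mE3 in auto)
    also have "(\<Sum>i\<in>UNIV. prob (E3 i)) \<le> (\<Sum>i\<in>(UNIV::'n set). \<delta> / (4 * n))"
      by (intro sum_mono PE3)
    also have "\<dots> = \<delta> / 4" using n by (simp add: n_def)
    finally show ?thesis using PE1 PE2 by simp
  qed
  have L0: "L \<ge> 0"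
  proof -
    define y :: "real ^ 'n" where "y = axis undefined 1"
    have "y \<noteq> 0" unfolding y_def by (simp add: axis_eq_0_iff)
    hence "norm y > 0" by simp
    moreover have "0 \<le> L * norm (0 - y)" using lip[of 0 y] norm_ge_zero by (meson order_trans)
    ultimately show ?thesis by (simp add: zero_le_mult_iff)
  qed
  have sub: "space M - U \<subseteq> Tg"
  proof
    fix \<omega> assume w: "\<omega> \<in> space M - U"
    define d where "d = \<mu>t \<omega> - \<mu>"
    have w1: "\<omega> \<notin> E1" "\<omega> \<notin> E2" "\<And>i. \<omega> \<notin> E3 i" "\<omega> \<in> space M" using w unfolding U_def by auto
    have lin: "\<bar>g \<bullet> d\<bar> < 3 * \<epsilon> / 4"
      using w1(1,2,4) unfolding E1_def E2_def d_def by (auto simp: sumY sum_negf)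
    have di: "L * (d $ i)\<^sup>2 \<le> \<epsilon> / (4 * n)" for i
    proof -
      have Ti: "real (T i) > 0" using Tpos[of i] by simp
      have "\<bar>(\<Sum>j<T i. X i j \<omega>) - real (T i) * \<mu> $ i\<bar> < real (T i) * s i"
        using w1(3)[of i] w1(4) unfolding E3_def by auto
      hence "\<bar>d $ i\<bar> < s i"
        unfolding d_def \<mu>t_def using Ti by (simp add: field_simps abs_divide[symmetric] pos_divide_less_eq abs_less_iff)
      hence "(d $ i)\<^sup>2 \<le> (s i)\<^sup>2" by (intro sq_le_of_abs_le) simp
      also have "(s i)\<^sup>2 = K2 / (2 * real (T i))" by (rule s2)
      finally have "L * (d $ i)\<^sup>2 \<le> L * (K2 / (2 * real (T i)))" using L0 by (intro mult_left_mono) auto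
      also have "\<dots> \<le> \<epsilon> / (4 * n)"
      proof -
        have "2 * n * L * K2 / \<epsilon> \<le> real (T i)" using Tbound[of i] unfolding n_def K2_def .
        hence "2 * n * L * K2 \<le> real (T i) * \<epsilon>" using eps by (simp add: field_simps)
        thus ?thesis using Ti n by (simp add: field_simps)
      qed
      finally show ?thesis .
    qed
    have quad: "L * (norm d)\<^sup>2 \<le> \<epsilon> / 4"
    proof -
      have "L * (norm d)\<^sup>2 = (\<Sum>i\<in>UNIV. L * (d $ i)\<^sup>2)"
        unfolding power2_norm_eq_inner inner_vec_def sum_distrib_left by (simp add: power2_eq_square)
      also have "\<dots> \<le> (\<Sum>i\<in>(UNIV::'n set). \<epsilon> / (4 * n))" by (intro sum_mono di)
      also have "\<dots> = \<epsilon> / 4" using n by (simp add: n_def)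
      finally show ?thesis .
    qed
    have tay: "\<bar>f (\<mu>t \<omega>) - f \<mu> - gradf \<mu> \<bullet> (\<mu>t \<omega> - \<mu>)\<bar> \<le> L * (norm (\<mu>t \<omega> - \<mu>))\<^sup>2"
      by (rule taylor_bound[OF grad lip L0])
    have "\<bar>f (\<mu>t \<omega>) - f \<mu>\<bar> \<le> \<epsilon>"
      using tay lin quad unfolding d_def g_def by linarith
    thus "\<omega> \<in> Tg" unfolding Tg_def using w1(4) by simp
  qed
  have "prob Tg \<ge> prob (space M - U)" by (rule finite_measure_mono[OF sub mTg])
  moreover have "prob (space M - U) = 1 - prob U" by (rule prob_compl[OF mU])
  ultimately have "prob Tg \<ge> 1 - \<delta> / 2" using PU by linarith
  thus ?thesis unfolding Tg_def \<mu>t_def .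
qed

end
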